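(* Let $g$ be a total recursive function such that, writing $\Phi_i(x,y)$ for the $i$-th $\Sigma^0_2$ formula, $\Phi_i(x,y)$ holds iff $W_{g(i,x,y)}$ is finite. Let $F(i,x,y,s)=\max_{y'\leq y}|W_{g(i,x,y'),s}|$, let $A_i=\{x:\forall y\ \lim_{s\to\infty}F(i,x,y,s)<\infty\}$, and let $$x(i,n,y,s)=\min\{x\in B^n:\forall x'\in B^n\ F(i,x,y,s)\leq F(i,x',y,s)\}.$$ Let $n$ be a natural number and $i$ an index such that $A_i$ is an infinite set with weak apartness and $A_i\cap B^n\neq\emptyset$. Then $\lim_{y\to\infty}\lim_{s\to\infty}x(i,n,y,s)$ exists and equals the unique element of $A_i\cap B^n$.
   Context: $W_e$ denotes the $e$-th recursively enumerable set and $W_{e,s}$ its enumeration up to stage $s$. For $x=\sum_{i=0}^{k}2^{n_i}\in\mathbb{Z}^+$ with $n_0<\cdots<n_k$, set $\mu(x)=n_k$ and $\lambda(x)=n_0$. For each $n$, $B^n=\{x\in\mathbb{Z}^+:\mu(x)=n\}$. A set $A$ has weak apartness if for every natural number $m$, $B^m\cap A$ has at most one element, and for every natural number $l$, there are at most two $x\in A$ with $\lambda(x)=l$. *)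

theory Defs
  imports Complex_Main
begin

definition mu :: "nat \<Rightarrow> nat" where
  "mu x = Max {k. bit x k}"

definition lam :: "nat \<Rightarrow> nat" where
  "lam x = Min {k. bit x k}"

definition B :: "nat \<Rightarrow> nat set" where
  "B n = {x. 0 < x \<and> mu x = n}"

definition weak_apartness :: "nat set \<Rightarrow> bool" where
  "weak_apartness A \<longleftrightarrow>
     (\<forall>m. \<forall>x\<in>B m \<inter> A. \<forall>x'\<in>B m \<inter> A. x = x') \<and>
     (\<forall>l. finite {x\<in>A. lam x = l} \<and> card {x\<in>A. lam x = l} \<le> 2)"

text \<open>Enumerations W e s (stage s approximation of the e-th r.e. set) are abstract
  parameters W :: nat => nat => nat set.\<close>

definition FF :: "(nat \<Rightarrow> nat \<Rightarrow> nat \<Rightarrow> nat) \<Rightarrow> (nat \<Rightarrow> nat \<Rightarrow> nat set)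
    \<Rightarrow> nat \<Rightarrow> nat \<Rightarrow> nat \<Rightarrow> nat \<Rightarrow> nat" where
  "FF g W i x y s = Max ((\<lambda>y'. card (W (g i x y') s)) ` {..y})"

definition AA :: "(nat \<Rightarrow> nat \<Rightarrow> nat \<Rightarrow> nat) \<Rightarrow> (nat \<Rightarrow> nat \<Rightarrow> nat set) \<Rightarrow> nat \<Rightarrow> nat set" where
  "AA g W i = {x. 0 < x \<and> (\<forall>y. \<exists>L::nat. (\<lambda>s. FF g W i x y s) \<longlonglongrightarrow> L)}"

definition xsel :: "(nat \<Rightarrow> nat \<Rightarrow> nat \<Rightarrow> nat) \<Rightarrow> (nat \<Rightarrow> nat \<Rightarrow> nat set)
    \<Rightarrow> nat \<Rightarrow> nat \<Rightarrow> nat \<Rightarrow> nat \<Rightarrow> nat" where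
  "xsel g W i n y s = Min {x\<in>B n. \<forall>x'\<in>B n. FF g W i x y s \<le> FF g W i x' y s}"

end

theory Submission
  imports Defs
begin

lemma nat_lim_ev:
  assumes "(f::nat\<Rightarrow>nat) \<longlonglongrightarrow> L"
  shows "\<forall>\<^sub>F s in sequentially. f s = L"
proof -
  have "\<forall>\<^sub>F s in sequentially. f s \<in> {L}"
    by (rule topological_tendstoD[OF assms]) (auto simp: open_discrete)
  then show ?thesis by simp
qed

lemma mono_unbounded:
  assumes m: "\<And>s t. s \<le> t \<Longrightarrow> (f::nat\<Rightarrow>nat) s \<le> f t"
    and nc: "\<not> (\<exists>L. f \<longlonglongrightarrow> L)"
  shows "\<forall>\<^sub>F s in sequentially. f s > L"
proof (rule ccontr)
  assume "\<not> (\<forall>\<^sub>F s in sequentially. f s > L)"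
  then have fr: "\<forall>s. \<exists>t\<ge>s. f t \<le> L"
    unfolding eventually_sequentially by (auto simp: not_less)
  have bd: "\<forall>s. f s \<le> L"
  proof
    fix s obtain t where "t \<ge> s" "f t \<le> L" using fr by blast
    then show "f s \<le> L" using m[of s t] by simp
  qed
  have fin: "finite (range f)" using bd
    by (metis finite_atMost finite_subset image_subsetI atMost_iff)
  define M where "M = Max (range f)"
  have "M \<in> range f" unfolding M_def using fin by (intro Max_in) auto
  then obtain s0 where s0: "f s0 = M" by auto
  have "\<forall>s\<ge>s0. f s = M"
  proof (intro allI impI)
    fix s assume "s0 \<le> s"
    then have "f s0 \<le> f s" by (rule m)
    moreover have "f s \<le> M" unfolding M_def using fin by simp
    ultimately show "f s = M" using s0 by simp
  qed
  then have "f \<longlonglongrightarrow> M"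
    by (intro tendsto_eventually) (auto simp: eventually_sequentially)
  then show False using nc by blast
qed

lemma bit_lt: "bit (x::nat) k \<Longrightarrow> k < x"
proof (rule ccontr)
  assume b: "bit x k" and "\<not> k < x"
  then have "x < 2 ^ k" using less_exp[of x] power_increasing[of x k "2::nat"] by linarith
  then have "x div 2 ^ k = 0" by simp
  then show False using b by (simp add: bit_nat_def)
qed

lemma high_bit:
  assumes "(2::nat) ^ m \<le> x"
  shows "\<exists>k\<ge>m. bit x k"
proof -
  have "drop_bit m x \<noteq> 0" using assms by (simp add: drop_bit_eq_div div_greater_zero_iff)
  then obtain j where "bit (drop_bit m x) j"
    using bit_eq_iff[of "drop_bit m x" 0] by auto
  then have "bit x (m + j)" by (simp add: bit_drop_bit_eq)
  then show ?thesis using le_add1 by blast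
qed

lemma B_sub: "B n \<subseteq> {..<2 ^ Suc n}"
proof
  fix x assume x: "x \<in> B n"
  then have "0 < x" "Max {k. bit x k} = n" by (auto simp: B_def mu_def)
  have fin: "finite {k. bit x k}" using bit_lt
    by (metis (no_types, lifting) finite_Collect_less_nat finite_subset mem_Collect_eq subsetI)
  show "x \<in> {..<2 ^ Suc n}"
  proof (rule ccontr)
    assume "x \<notin> {..<2 ^ Suc n}"
    then obtain k where "k \<ge> Suc n" "bit x k" using high_bit[of "Suc n" x] by auto
    then have "k \<le> Max {k. bit x k}" using fin by simp
    then show False using \<open>Max {k. bit x k} = n\<close> \<open>k \<ge> Suc n\<close> by simp
  qed
qed

lemma finB: "finite (B n)"
  using B_sub finite_subset by blast

theorem lemma3p4:
  fixes g :: "nat \<Rightarrow> nat \<Rightarrow> nat \<Rightarrow> nat"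
    and W :: "nat \<Rightarrow> nat \<Rightarrow> nat set"
    and \<Phi> :: "nat \<Rightarrow> nat \<Rightarrow> nat \<Rightarrow> bool"
    and i n :: nat
  assumes W_fin: "\<And>e s. finite (W e s)"
    and W_mono: "\<And>e s t. s \<le> t \<Longrightarrow> W e s \<subseteq> W e t"
    and g_Phi: "\<And>i x y. \<Phi> i x y \<longleftrightarrow> finite (\<Union>s. W (g i x y) s)"
    and inf: "infinite (AA g W i)"
    and wa: "weak_apartness (AA g W i)"
    and ne: "AA g W i \<inter> B n \<noteq> {}"
  shows "\<exists>h::nat \<Rightarrow> nat.
           (\<forall>\<^sub>F y in sequentially. (\<lambda>s. xsel g W i n y s) \<longlonglongrightarrow> h y) \<and>
           h \<longlonglongrightarrow> (THE a. a \<in> AA g W i \<inter> B n)"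
proof -
  let ?A = "AA g W i"
  let ?F = "FF g W i"
  obtain a where a: "a \<in> ?A \<inter> B n" using ne by blast
  have uniq: "\<And>x. x \<in> ?A \<inter> B n \<Longrightarrow> x = a"
    using wa a unfolding weak_apartness_def by blast
  have theA: "(THE a. a \<in> ?A \<inter> B n) = a"
    using a uniq by blast
  have monoS: "\<And>x y s t. s \<le> t \<Longrightarrow> ?F x y s \<le> ?F x y t"
  proof -
    fix x y s t assume st: "(s::nat) \<le> t"
    show "?F x y s \<le> ?F x y t" unfolding FF_def
    proof (subst Max_le_iff, simp, simp, intro ballI)
      fix v assume "v \<in> (\<lambda>y'. card (W (g i x y') s)) ` {..y}"
      then obtain y' where y': "y' \<le> y" "v = card (W (g i x y') s)" by auto
      have "v \<le> card (W (g i x y') t)" using y' W_mono[OF st] W_fin by (simp add: card_mono)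
      also have "\<dots> \<le> Max ((\<lambda>y'. card (W (g i x y') t)) ` {..y})"
        using y' by (intro Max_ge) auto
      finally show "v \<le> Max ((\<lambda>y'. card (W (g i x y') t)) ` {..y})" .
    qed
  qed
  have monoY: "\<And>x y y2 s. y \<le> y2 \<Longrightarrow> ?F x y s \<le> ?F x y2 s"
    unfolding FF_def by (intro Max_mono) auto
  have bad: "\<forall>x \<in> B n - {a}. \<exists>y. \<not> (\<exists>L. (\<lambda>s. ?F x y s) \<longlonglongrightarrow> L)"
  proof
    fix x assume x: "x \<in> B n - {a}"
    then have "x \<notin> ?A" using uniq by blast
    moreover have "0 < x" using x by (simp add: B_def)
    ultimately show "\<exists>y. \<not> (\<exists>L. (\<lambda>s. ?F x y s) \<longlonglongrightarrow> L)"
      unfolding AA_def by blast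
  qed
  then obtain yb where yb: "\<And>x. x \<in> B n - {a} \<Longrightarrow> \<not> (\<exists>L. (\<lambda>s. ?F x (yb x) s) \<longlonglongrightarrow> L)"
    by metis
  define Y where "Y = Max (insert 0 (yb ` (B n - {a})))"
  have Yge: "\<And>x. x \<in> B n - {a} \<Longrightarrow> yb x \<le> Y"
    unfolding Y_def using finB by (intro Max_ge) auto
  have conv: "\<And>y. y \<ge> Y \<Longrightarrow> (\<lambda>s. xsel g W i n y s) \<longlonglongrightarrow> a"
  proof -
    fix y assume "y \<ge> Y"
    obtain L where L: "(\<lambda>s. ?F a y s) \<longlonglongrightarrow> L" using a unfolding AA_def by blast
    have evL: "\<forall>\<^sub>F s in sequentially. ?F a y s = L" using nat_lim_ev[OF L] .
    have evx: "\<forall>\<^sub>F s in sequentially. \<forall>x\<in>B n - {a}. ?F x y s > L"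
    proof (rule eventually_ball_finite)
      show "finite (B n - {a})" using finB by simp
      show "\<forall>x\<in>B n - {a}. \<forall>\<^sub>F s in sequentially. L < ?F x y s"
      proof
        fix x assume x: "x \<in> B n - {a}"
        have "\<forall>\<^sub>F s in sequentially. L < ?F x (yb x) s"
          by (rule mono_unbounded[OF monoS yb[OF x]])
        moreover have "yb x \<le> y" using Yge[OF x] \<open>y \<ge> Y\<close> by simp
        ultimately show "\<forall>\<^sub>F s in sequentially. L < ?F x y s"
        proof (elim eventually_mono)
          fix s assume "L < ?F x (yb x) s" "yb x \<le> y"
          then show "L < ?F x y s" using monoY[of "yb x" y x s] by linarith
        qed
      qed
    qed
    have "\<forall>\<^sub>F s in sequentially. xsel g W i n y s = a"
      using evL evx
    proof (rule eventually_elim2)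
      fix s assume h1: "?F a y s = L" and h2: "\<forall>x\<in>B n - {a}. L < ?F x y s"
      have "{x\<in>B n. \<forall>x'\<in>B n. ?F x y s \<le> ?F x' y s} = {a}"
      proof (intro equalityI subsetI)
        fix x assume "x \<in> {x\<in>B n. \<forall>x'\<in>B n. ?F x y s \<le> ?F x' y s}"
        then have "x \<in> B n" "?F x y s \<le> ?F a y s" using a by auto
        then show "x \<in> {a}" using h1 h2[rule_format, of x] by (cases "x = a") auto
      next
        fix x assume "x \<in> {a}"
        then show "x \<in> {x\<in>B n. \<forall>x'\<in>B n. ?F x y s \<le> ?F x' y s}"
        proof -
          have "\<forall>x'\<in>B n. ?F a y s \<le> ?F x' y s"
          proof
            fix x' assume "x' \<in> B n"
            then show "?F a y s \<le> ?F x' y s" using h1 h2[rule_format, of x'] by (cases "x' = a") auto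
          qed
          then show ?thesis using \<open>x \<in> {a}\<close> a by auto
        qed
      qed
      then show "xsel g W i n y s = a" unfolding xsel_def by simp
    qed
    then show "(\<lambda>s. xsel g W i n y s) \<longlonglongrightarrow> a" by (rule tendsto_eventually)
  qed
  show ?thesis
  proof (intro exI conjI)
    show "\<forall>\<^sub>F y in sequentially. (\<lambda>s. xsel g W i n y s) \<longlonglongrightarrow> (\<lambda>_. a) y"
      using conv by (auto simp: eventually_sequentially)
    show "(\<lambda>_. a) \<longlonglongrightarrow> (THE a. a \<in> AA g W i \<inter> B n)"
      unfolding theA by simp
  qed
qed

end
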